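(* Let $\mathcal{G}=(V,E,\lambda)$ be a temporal graph, $s\in V$, and $v\in V$. Suppose $(u_i,a_i,d_i)$ is a triplet at $v$ corresponding to a valid bi-path between $s$ and $v$, i.e., there is a bi-path between $s$ and $v$ whose last edge is $u_iv$, whose temporal path from $s$ to $v$ arrives at $v$ at time at most $a_i$, and whose temporal path from $v$ to $s$ departs from $v$ at time at least $d_i$. Let $w\neq u_i$ be a neighbor of $v$, and let $a_i'=\min\{t\in\lambda(vw)\mid t\ge a_i\}$ and $d_i'=\max\{t\in\lambda(vw)\mid t\le d_i\}$. If both sets are nonempty, then the triplet $(v,a_i',d_i')$ at $w$ corresponds to a valid bi-path between $s$ and $w$ (i.e., there is a bi-path between $s$ and $w$ whose last edge is $vw$, arriving at $w$ by time $a_i'$ and departing from $w$ at time $d_i'$ or later).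
   Context: A temporal graph is $\mathcal{G}=(V,E,\lambda)$ with $V$ finite, $E$ undirected edges, $\lambda:E\to 2^{\mathbb{N}}$ the time labels. A (non-strict) temporal path is a sequence of pairs $(e_i,t_i)$, $t_i\in\lambda(e_i)$, such that $\langle e_i\rangle$ is a path in $(V,E)$ and $\langle t_i\rangle$ is non-decreasing. A bi-path between $x$ and $y$ is a pair $(p_1,p_2)$ where $p_1$ is a temporal path from $x$ to $y$, $p_2$ is a temporal path from $y$ to $x$, and $p_2$ traverses the same underlying path as $p_1$ in reverse. The trivial bi-path from $s$ to itself corresponds to the triplet $(\bot,-\infty,\infty)$. *)

theory Defs
  imports "HOL-Library.Extended_Real"
begin

definition temporal_graph :: "'v set \<Rightarrow> 'v set set \<Rightarrow> bool" where
  "temporal_graph V E \<longleftrightarrow> finite V \<and>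
     (\<forall>e\<in>E. \<exists>x y. x \<in> V \<and> y \<in> V \<and> x \<noteq> y \<and> e = {x, y})"

definition graph_path :: "'v set set \<Rightarrow> 'v list \<Rightarrow> bool" where
  "graph_path E xs \<longleftrightarrow> xs \<noteq> [] \<and>
     (\<forall>i. Suc i < length xs \<longrightarrow> {xs ! i, xs ! Suc i} \<in> E)"

text \<open>The underlying path is xs = [s = x0, ..., x(k-1) = u, xk = v] (k \<ge> 1);
  edge i is {xs!i, xs!(i+1)}, i < k.  f i is the time at which the forward
  temporal path (s to v) uses edge i, g i the time at which the backward temporal
  path (v to s, same edges in reverse order) uses edge i.\<close>

definition bipath_with :: "'v set set \<Rightarrow> ('v set \<Rightarrow> nat set) \<Rightarrow> 'v \<Rightarrow> 'v \<Rightarrow> 'v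
    \<Rightarrow> ereal \<Rightarrow> ereal \<Rightarrow> bool" where
  "bipath_with E lab s v u a d \<longleftrightarrow>
     (\<exists>xs f g. graph_path E xs \<and> length xs \<ge> 2 \<and>
        hd xs = s \<and> last xs = v \<and> xs ! (length xs - 2) = u \<and>
        (\<forall>i. i < length xs - 1 \<longrightarrow> f i \<in> lab {xs ! i, xs ! Suc i}) \<and>
        (\<forall>i j. i \<le> j \<and> j < length xs - 1 \<longrightarrow> f i \<le> f j) \<and>
        (\<forall>i. i < length xs - 1 \<longrightarrow> g i \<in> lab {xs ! i, xs ! Suc i}) \<and>
        (\<forall>i j. i \<le> j \<and> j < length xs - 1 \<longrightarrow> g j \<le> g i) \<and>
        ereal (f (length xs - 2)) \<le> a \<and>
        d \<le> ereal (g (length xs - 2)))"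

text \<open>A triplet (u,a,d) at v (u = None encodes \<bottom>) corresponds to a valid
  bi-path between s and v: either it is the trivial triplet (\<bottom>,-\<infinity>,\<infinity>) at s,
  or a non-trivial bi-path as above exists.\<close>

definition valid_triplet :: "'v set set \<Rightarrow> ('v set \<Rightarrow> nat set) \<Rightarrow> 'v \<Rightarrow> 'v
    \<Rightarrow> 'v option \<Rightarrow> ereal \<Rightarrow> ereal \<Rightarrow> bool" where
  "valid_triplet E lab s v u a d \<longleftrightarrow>
     (v = s \<and> u = None \<and> a = -\<infinity> \<and> d = \<infinity>) \<or>
     (\<exists>u'. u = Some u' \<and> bipath_with E lab s v u' a d)"

end

theory Submission
  imports Defs
begin

lemma extend:
  assumes "graph_path E xs" "length xs \<ge> 1" "hd xs = s" "last xs = v"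
    and "{v, w} \<in> E"
    and fl: "\<forall>i. i < length xs - 1 \<longrightarrow> f i \<in> lab {xs ! i, xs ! Suc i}"
    and fm: "\<forall>i j. i \<le> j \<and> j < length xs - 1 \<longrightarrow> f i \<le> f j"
    and gl: "\<forall>i. i < length xs - 1 \<longrightarrow> g i \<in> lab {xs ! i, xs ! Suc i}"
    and gm: "\<forall>i j. i \<le> j \<and> j < length xs - 1 \<longrightarrow> g j \<le> g i"
    and fa: "\<forall>i. i < length xs - 1 \<longrightarrow> f i \<le> a'"
    and gd: "\<forall>i. i < length xs - 1 \<longrightarrow> d' \<le> g i"
    and "a' \<in> lab {v, w}" "d' \<in> lab {v, w}"
  shows "bipath_with E lab s w v (ereal a') (ereal d')"
proof -
  define n where "n = length xs"
  have n1: "n \<ge> 1" using assms(2) n_def by simp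
  have lastv: "xs ! (n - 1) = v" using assms(4) n1 n_def by (metis One_nat_def last_conv_nth list.size(3) not_one_le_zero)
  define ys where "ys = xs @ [w]"
  define f' where "f' i = (if i < n - 1 then f i else a')" for i
  define g' where "g' i = (if i < n - 1 then g i else d')" for i
  have ly: "length ys = Suc n" using ys_def n_def by simp
  have ysi: "i < n \<Longrightarrow> ys ! i = xs ! i" for i using ys_def n_def by (simp add: nth_append)
  have ysn: "ys ! n = w" using ys_def n_def by simp
  have gp: "graph_path E ys"
    unfolding graph_path_def
  proof (intro conjI allI impI)
    show "ys \<noteq> []" using ys_def by simp
    fix i assume i: "Suc i < length ys"
    show "{ys ! i, ys ! Suc i} \<in> E"
    proof (cases "Suc i < n")
      case True
      then show ?thesis using assms(1) ysi[of i] ysi[of "Suc i"] n_def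
        unfolding graph_path_def by auto
    next
      case False
      then have "i = n - 1" "Suc i = n" using i ly n1 by auto
      then show ?thesis using ysi[of i] ysn lastv assms(5) n1 by auto
    qed
  qed
  show ?thesis unfolding bipath_with_def
  proof (rule exI[of _ ys], rule exI[of _ f'], rule exI[of _ g'], intro conjI allI impI)
    show "graph_path E ys" by (rule gp)
    show "2 \<le> length ys" using ly n1 by simp
    show "hd ys = s" using ys_def assms(3) assms(2) by (cases xs) auto
    show "last ys = w" using ys_def by simp
    show "ys ! (length ys - 2) = v" using ly ysi[of "n-1"] lastv n1 by simp
    show "ereal (f' (length ys - 2)) \<le> ereal a'" by (simp add: ly f'_def)
    show "ereal d' \<le> ereal (g' (length ys - 2))" by (simp add: ly g'_def)
  next
    fix i assume i: "i < length ys - 1"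
    show "f' i \<in> lab {ys ! i, ys ! Suc i}"
    proof (cases "i < n - 1")
      case True
      then show ?thesis using fl f'_def ysi[of i] ysi[of "Suc i"] n_def by auto
    next
      case False
      then have "i = n - 1" "Suc i = n" using i ly n1 by auto
      then show ?thesis using f'_def ysi[of i] ysn lastv assms n1 by auto
    qed
    show "g' i \<in> lab {ys ! i, ys ! Suc i}"
    proof (cases "i < n - 1")
      case True
      then show ?thesis using gl g'_def ysi[of i] ysi[of "Suc i"] n_def by auto
    next
      case False
      then have "i = n - 1" "Suc i = n" using i ly n1 by auto
      then show ?thesis using g'_def ysi[of i] ysn lastv assms n1 by auto
    qed
  next
    fix i j assume ij: "i \<le> j \<and> j < length ys - 1"
    show "f' i \<le> f' j" using ij fm fa f'_def n_def by auto
    show "g' j \<le> g' i" using ij gm gd g'_def n_def by auto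
  qed
qed

theorem lemma3:
  fixes V :: "'v set" and E :: "'v set set" and lab :: "'v set \<Rightarrow> nat set"
    and s v w :: 'v and u :: "'v option" and a d :: ereal and a' d' :: nat
  assumes "temporal_graph V E"
    and "s \<in> V" and "v \<in> V"
    and "valid_triplet E lab s v u a d"
    and "{v, w} \<in> E" and "u \<noteq> Some w"
    and "a' \<in> lab {v, w}" and "ereal a' \<ge> a"
    and "\<forall>t \<in> lab {v, w}. ereal t \<ge> a \<longrightarrow> a' \<le> t"
    and "d' \<in> lab {v, w}" and "ereal d' \<le> d"
    and "\<forall>t \<in> lab {v, w}. ereal t \<le> d \<longrightarrow> t \<le> d'"
  shows "valid_triplet E lab s w (Some v) (ereal a') (ereal d')"
proof -
  have "(v = s) \<or> (\<exists>u'. bipath_with E lab s v u' a d)" using assms(4) unfolding valid_triplet_def by blast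
  then show ?thesis
  proof (elim disjE exE)
  assume "v = s"
  have "bipath_with E lab s w v (ereal a') (ereal d')"
    by (rule extend[of E "[s]" s v w "\<lambda>_. 0" lab "\<lambda>_. 0" a' d'])
       (use assms \<open>v = s\<close> in \<open>auto simp: graph_path_def\<close>)
  then show ?thesis by (simp add: valid_triplet_def)
next
  fix u' assume "bipath_with E lab s v u' a d"
  then obtain xs f g where H: "graph_path E xs" "length xs \<ge> 2" "hd xs = s" "last xs = v"
    "\<forall>i. i < length xs - 1 \<longrightarrow> f i \<in> lab {xs ! i, xs ! Suc i}"
    "\<forall>i j. i \<le> j \<and> j < length xs - 1 \<longrightarrow> f i \<le> f j"
    "\<forall>i. i < length xs - 1 \<longrightarrow> g i \<in> lab {xs ! i, xs ! Suc i}"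
    "\<forall>i j. i \<le> j \<and> j < length xs - 1 \<longrightarrow> g j \<le> g i"
    "ereal (f (length xs - 2)) \<le> a" "d \<le> ereal (g (length xs - 2))"
    unfolding bipath_with_def by blast
  have fa: "\<forall>i. i < length xs - 1 \<longrightarrow> f i \<le> a'"
  proof (intro allI impI)
    fix i assume "i < length xs - 1"
    then have "f i \<le> f (length xs - 2)" using H(6)[rule_format, of i "length xs - 2"] H(2) by linarith
    moreover have "ereal (f (length xs - 2)) \<le> ereal a'" using H(9) assms(8) by (rule order_trans)
    ultimately show "f i \<le> a'" by simp
  qed
  have gd: "\<forall>i. i < length xs - 1 \<longrightarrow> d' \<le> g i"
  proof (intro allI impI)
    fix i assume "i < length xs - 1"
    then have "g (length xs - 2) \<le> g i" using H(8)[rule_format, of i "length xs - 2"] H(2) by linarith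
    moreover have "ereal d' \<le> ereal (g (length xs - 2))" using assms(11) H(10) by (rule order_trans)
    ultimately show "d' \<le> g i" by simp
  qed
  have "bipath_with E lab s w v (ereal a') (ereal d')"
    by (rule extend[OF H(1) _ H(3) H(4) assms(5) H(5) H(6) H(7) H(8) fa gd assms(7) assms(10)])
       (use H(2) in simp)
  then show ?thesis by (simp add: valid_triplet_def)
qed
qed

end
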